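(* Let $\mathbb{X},\mathbb{Y}$ be real Banach spaces such that $\operatorname{Sm}\mathbb{X}$ and $\operatorname{Sm}\mathbb{Y}$ are dense $G_\delta$ subsets of $\mathbb{X}$ and $\mathbb{Y}$ respectively. If a bijective bounded linear operator $T:\mathbb{X}\to\mathbb{Y}$ preserves Birkhoff–James orthogonality at each point of $\operatorname{Sm}\mathbb{X}\cap T^{-1}(\operatorname{Sm}\mathbb{Y})$, then $T$ is a scalar multiple of an isometry, i.e. there is a constant $\lambda>0$ with $\|Tx\|=\lambda\|x\|$ for all $x\in\mathbb{X}$.
   Context: $u\perp_B v$ means $\|u+\lambda v\|\ge\|u\|$ for all real $\lambda$. $T$ preserves Birkhoff–James orthogonality at $x$ if $x\perp_B v$ implies $Tx\perp_B Tv$ for all $v$. For non-zero $z$, $J(z)=\{f\in\mathbb{X}^*:\|f\|=1,\ f(z)=\|z\|\}$; $z$ is smooth if $J(z)$ is a singleton; $\operatorname{Sm}\mathbb{X}$ is the set of smooth points. *)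

theory Defs
  imports "HOL-Analysis.Analysis"
begin

definition bj_orth :: "'a::real_normed_vector \<Rightarrow> 'a \<Rightarrow> bool" where
  "bj_orth u v \<longleftrightarrow> (\<forall>l::real. norm (u + l *\<^sub>R v) \<ge> norm u)"

definition preserves_bj_at :: "('a::real_normed_vector \<Rightarrow> 'b::real_normed_vector) \<Rightarrow> 'a \<Rightarrow> bool" where
  "preserves_bj_at T x \<longleftrightarrow> (\<forall>v. bj_orth x v \<longrightarrow> bj_orth (T x) (T v))"

definition supp_funcs :: "'a::real_normed_vector \<Rightarrow> ('a \<Rightarrow>\<^sub>L real) set" where
  "supp_funcs z = {f. norm f = 1 \<and> blinfun_apply f z = norm z}"

definition smooth_point :: "'a::real_normed_vector \<Rightarrow> bool" where
  "smooth_point z \<longleftrightarrow> z \<noteq> 0 \<and> (\<exists>f. supp_funcs z = {f})"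

definition smooth_points :: "'a::real_normed_vector set" where
  "smooth_points = {z. smooth_point z}"

end

theory Submission
  imports Defs
begin


definition dq :: "'a::real_normed_vector \<Rightarrow> 'a \<Rightarrow> real \<Rightarrow> real" where
  "dq u w s = (norm (u + s *\<^sub>R w) - norm u) / s"

definition dd :: "'a::real_normed_vector \<Rightarrow> 'a \<Rightarrow> real" where
  "dd u w = Inf (dq u w ` {0<..})"

lemma dq_mono:
  assumes "0 < s" "s \<le> s'"
  shows "dq u w s \<le> dq u w s'"
proof -
  define th where "th = s / s'"
  have s': "0 < s'" using assms by simp
  have th: "0 < th" "th \<le> 1" using assms by (auto simp: th_def)
  have "u + s *\<^sub>R w = (1 - th) *\<^sub>R u + th *\<^sub>R (u + s' *\<^sub>R w)"
    using s' by (simp add: th_def algebra_simps)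
  then have "norm (u + s *\<^sub>R w) \<le> (1 - th) * norm u + th * norm (u + s' *\<^sub>R w)"
    using th by (metis (no_types, opaque_lifting) abs_of_nonneg diff_ge_0_iff_ge less_imp_le norm_scaleR norm_triangle_ineq)
  then have "norm (u + s *\<^sub>R w) - norm u \<le> th * (norm (u + s' *\<^sub>R w) - norm u)"
    by (simp add: algebra_simps)
  then have "(norm (u + s *\<^sub>R w) - norm u) / s \<le> th * (norm (u + s' *\<^sub>R w) - norm u) / s"
    using assms by (simp add: divide_right_mono)
  also have "\<dots> = (norm (u + s' *\<^sub>R w) - norm u) / s'"
    using assms s' by (simp add: th_def)
  finally show ?thesis by (simp add: dq_def)
qed

lemma dq_lower:
  assumes "0 < s" shows "- norm w \<le> dq u w s"
proof -
  have "norm u \<le> norm (u + s *\<^sub>R w) + s * norm w"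
    using norm_triangle_ineq4[of "u + s *\<^sub>R w" "s *\<^sub>R w"] assms by simp
  then have "- norm w * s \<le> norm (u + s *\<^sub>R w) - norm u" by (simp add: mult.commute)
  then show ?thesis using assms by (simp add: dq_def le_divide_eq)
qed

lemma dd_tendsto: "(dq u w \<longlongrightarrow> dd u w) (at_right 0)"
proof (rule tendstoI)
  fix e :: real assume e: "0 < e"
  have bdd: "bdd_below (dq u w ` {0<..})"
    using dq_lower by (intro bdd_belowI[of _ "- norm w"]) auto
  have ne: "dq u w ` {0<..} \<noteq> {}" by auto
  have "dd u w < dd u w + e" using e by simp
  then obtain z where z: "z \<in> dq u w ` {0<..}" "z < dd u w + e"
    unfolding dd_def using cInf_lessD[OF ne] by blast
  then obtain s1 where s1: "0 < s1" "dq u w s1 < dd u w + e" by auto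
  show "\<forall>\<^sub>F s in at_right 0. dist (dq u w s) (dd u w) < e"
    unfolding eventually_at_right[OF s1(1)]
  proof (intro exI[of _ s1] conjI allI impI)
    fix s assume "0 < s" "s < s1"
    then have "dd u w \<le> dq u w s" "dq u w s \<le> dq u w s1"
      unfolding dd_def using bdd by (auto intro!: cInf_lower dq_mono)
    then show "dist (dq u w s) (dd u w) < e" using s1 e by (simp add: dist_real_def)
  qed (use s1 in auto)
qed



lemma sandwich_est:
  fixes L :: "'a::real_normed_vector \<Rightarrow> 'b::real_normed_vector" and \<phi> :: "'a \<Rightarrow> real"
  assumes L: "bounded_linear L" and ph: "bounded_linear \<phi>"
    and le: "\<And>z. \<phi> z \<le> norm (L z)" and eq: "\<phi> y = norm (L y)"
    and s: "0 < s" and e: "norm (L (y - p - s *\<^sub>R v)) \<le> B * s"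
  shows "dq (L p) (L v) s - 2 * B \<le> \<phi> v"
    and "\<phi> v \<le> 2 * dq (L p) (L v) (2 * s) - dq (L p) (L v) s + 2 * B"
proof -
  interpret L: bounded_linear L by fact
  interpret ph: bounded_linear \<phi> by fact
  define e where "e = y - p - s *\<^sub>R v"
  have y: "y = p + s *\<^sub>R v + e" by (simp add: e_def)
  have Ly: "L y = (L p + s *\<^sub>R L v) + L e" by (simp add: y L.add L.scaleR)
  have ph_e: "\<phi> e \<le> B * s" using le[of e] e by (simp add: e_def)
  have ph_me: "- \<phi> e \<le> B * s"
  proof -
    have "\<phi> (- e) \<le> norm (L (- e))" by (rule le)
    then show ?thesis using e by (simp add: e_def[symmetric] ph.neg L.neg)
  qed
  have n1: "norm (L p + s *\<^sub>R L v) - norm (L e) \<le> norm (L y)"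
    unfolding Ly using norm_triangle_ineq4[of "L p + s *\<^sub>R L v + L e" "L e"] by simp
  have phy: "\<phi> y = \<phi> p + s * \<phi> v + \<phi> e" by (simp add: y ph.add ph.scaleR)
  have "\<phi> p \<le> norm (L p)" by (rule le)
  have A: "s * dq (L p) (L v) s = norm (L p + s *\<^sub>R L v) - norm (L p)"
    using s by (simp add: dq_def)
  have A2: "(2 * s) * dq (L p) (L v) (2 * s) = norm (L p + (2 * s) *\<^sub>R L v) - norm (L p)"
    using s by (simp add: dq_def)
  have "s * dq (L p) (L v) s - 2 * B * s \<le> s * \<phi> v"
    using A n1 phy eq \<open>\<phi> p \<le> norm (L p)\<close> e ph_e unfolding e_def by linarith
  then have "s * (dq (L p) (L v) s - 2 * B) \<le> s * \<phi> v" by (simp add: algebra_simps)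
  then show "dq (L p) (L v) s - 2 * B \<le> \<phi> v"
    using s mult_left_le_imp_le by blast
  have "\<phi> (p + (2 * s) *\<^sub>R v) \<le> norm (L (p + (2 * s) *\<^sub>R v))" by (rule le)
  then have c: "\<phi> p + 2 * s * \<phi> v \<le> norm (L p + (2 * s) *\<^sub>R L v)"
    by (simp add: ph.add ph.scaleR L.add L.scaleR)
  have "s * \<phi> v \<le> (2 * s) * dq (L p) (L v) (2 * s) - s * dq (L p) (L v) s + 2 * B * s"
    using A A2 n1 phy eq c e ph_e unfolding e_def by linarith
  then have "s * \<phi> v \<le> s * (2 * dq (L p) (L v) (2 * s) - dq (L p) (L v) s + 2 * B)" by (simp add: algebra_simps)
  then show "\<phi> v \<le> 2 * dq (L p) (L v) (2 * s) - dq (L p) (L v) s + 2 * B"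
    using s mult_left_le_imp_le by blast
qed



lemma supp_dominate:
  fixes T :: "'a::real_normed_vector \<Rightarrow> 'b::real_normed_vector"
  assumes T: "bounded_linear T" and y: "y \<noteq> 0" and pres: "preserves_bj_at T y"
    and f1: "norm f = 1" and fy: "blinfun_apply f y = norm y"
  shows "(norm (T y) / norm y) * f z \<le> norm (T z)"
proof (cases "f z \<le> 0")
  case True
  then show ?thesis
    by (metis divide_nonneg_nonneg mult_nonneg_nonpos norm_ge_zero order_trans)
next
  case False
  interpret T: bounded_linear T by fact
  define a where "a = f z"
  have a: "0 < a" using False by (simp add: a_def)
  have ny: "0 < norm y" using y by simp
  define w where "w = (norm y / a) *\<^sub>R z - y"
  have fw: "f w = 0" using a by (simp add: w_def blinfun.diff_right blinfun.scaleR_right fy a_def[symmetric])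
  have fle: "\<And>x. f x \<le> norm x"
    using norm_blinfun[of f] f1 by (metis abs_le_D1 mult_1 real_norm_def)
  have "bj_orth y w"
    unfolding bj_orth_def
  proof
    fix l :: real
    have "f (y + l *\<^sub>R w) = norm y" by (simp add: blinfun.add_right blinfun.scaleR_right fw fy)
    then show "norm y \<le> norm (y + l *\<^sub>R w)" using fle by metis
  qed
  then have "bj_orth (T y) (T w)" using pres by (simp add: preserves_bj_at_def)
  then have "norm (T y) \<le> norm (T y + 1 *\<^sub>R T w)" unfolding bj_orth_def by blast
  also have "T y + 1 *\<^sub>R T w = (norm y / a) *\<^sub>R T z"
    by (simp add: w_def T.diff T.scaleR)
  finally have "norm (T y) \<le> (norm y / a) * norm (T z)" using a ny by simp
  then have "norm (T y) * a \<le> norm y * norm (T z)" using a by (simp add: field_simps)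
  then show ?thesis using a ny by (simp add: a_def[symmetric] field_simps)
qed



lemma seq_at_right: "filterlim (\<lambda>n. c / real (Suc n)) (at_right 0) sequentially" if "(0::real) < c"
proof -
  have "(\<lambda>n. c * inverse (real (Suc n))) \<longlonglongrightarrow> c * 0"
    by (intro tendsto_intros LIMSEQ_inverse_real_of_nat)
  then have "(\<lambda>n. c / real (Suc n)) \<longlonglongrightarrow> 0" by (simp add: divide_inverse)
  then show ?thesis using that by (auto simp: filterlim_at)
qed

lemma keyC:
  fixes T :: "'a::real_normed_vector \<Rightarrow> 'b::real_normed_vector"
  assumes T: "bounded_linear T" and K: "\<And>z. norm (T z) \<le> K * norm z"
    and dense: "\<And>z e. 0 < e \<Longrightarrow> \<exists>y\<in>D. dist y z < e"
    and Dp: "\<And>y. y \<in> D \<Longrightarrow> y \<noteq> 0 \<and> (\<exists>f::'a \<Rightarrow>\<^sub>L real. norm f = 1 \<and> blinfun_apply f y = norm y \<and>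
               (\<forall>z. (norm (T y) / norm y) * blinfun_apply f z \<le> norm (T z)))"
    and p: "p \<noteq> 0"
  shows "dd (T p) (T v) = (norm (T p) / norm p) * dd p v"
proof -
  interpret T: bounded_linear T by fact
  have K0: "0 \<le> K"
  proof -
    have "0 \<le> K * norm p" using K[of p] norm_ge_zero order_trans by blast
    then show ?thesis using p by (simp add: zero_le_mult_iff)
  qed
  define s where "s n = 1 / real (Suc n)" for n
  have s0: "0 < s n" for n by (simp add: s_def)
  have "\<forall>n. \<exists>y. y \<in> D \<and> dist y (p + s n *\<^sub>R v) < s n * s n"
    using dense s0 by (metis mult_pos_pos)
  then obtain y where y: "\<And>n. y n \<in> D" "\<And>n. dist (y n) (p + s n *\<^sub>R v) < s n * s n"
    by metis
  have "\<forall>n. \<exists>f::'a \<Rightarrow>\<^sub>L real. norm f = 1 \<and> blinfun_apply f (y n) = norm (y n) \<and>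
               (\<forall>z. (norm (T (y n)) / norm (y n)) * blinfun_apply f z \<le> norm (T z))"
    using Dp y(1) by blast
  then obtain f where f: "\<And>n. norm (f n) = 1" "\<And>n. blinfun_apply (f n) (y n) = norm (y n)"
    "\<And>n z. (norm (T (y n)) / norm (y n)) * blinfun_apply (f n) z \<le> norm (T z)"
    by metis
  have yn0: "y n \<noteq> 0" for n using Dp y(1) by blast
  define R where "R z = norm (T z) / norm z" for z
  have fle: "\<And>n x. blinfun_apply (f n) x \<le> norm x"
    using norm_blinfun f(1) by (metis abs_le_D1 mult_1 real_norm_def)
  have en: "norm (y n - p - s n *\<^sub>R v) \<le> s n * s n" for n
    using y(2)[of n] by (simp add: dist_norm algebra_simps)
  have lid: "bounded_linear (id :: 'a \<Rightarrow> 'a)" unfolding id_def by (rule bounded_linear_ident)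
  have M: "dq p v (s n) - 2 * s n \<le> blinfun_apply (f n) v \<and> blinfun_apply (f n) v \<le> 2 * dq p v (2 * s n) - dq p v (s n) + 2 * s n" for n
    using sandwich_est[of id "blinfun_apply (f n)" "y n" "s n" p v "s n"]
      lid blinfun.bounded_linear_right fle f(2) s0 en by auto
  have eTn: "norm (T (y n - p - s n *\<^sub>R v)) \<le> (K * s n) * s n" for n
    using K[of "y n - p - s n *\<^sub>R v"] en[of n] K0 by (metis mult.assoc mult_left_mono order_trans)
  have Rf: "R (y n) * blinfun_apply (f n) (y n) = norm (T (y n))" for n
    using yn0 by (simp add: R_def f(2))
  have N: "dq (T p) (T v) (s n) - 2 * (K * s n) \<le> R (y n) * blinfun_apply (f n) v \<and>
      R (y n) * blinfun_apply (f n) v \<le> 2 * dq (T p) (T v) (2 * s n) - dq (T p) (T v) (s n) + 2 * (K * s n)" for n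
    using sandwich_est[of T "\<lambda>z. R (y n) * blinfun_apply (f n) z" "y n" "s n" p v "K * s n"]
      T bounded_linear_const_mult[OF blinfun.bounded_linear_right] f(3)[unfolded R_def[symmetric]]
      Rf s0 eTn by auto
  have hs: "filterlim s (at_right 0) sequentially"
    using seq_at_right[of 1] unfolding s_def by simp
  have h2s: "filterlim (\<lambda>n. 2 * s n) (at_right 0) sequentially"
    using seq_at_right[of 2] unfolding s_def by simp
  have sl: "s \<longlonglongrightarrow> 0" using hs by (simp add: filterlim_at)
  have q1: "(\<lambda>n. dq u w (s n)) \<longlonglongrightarrow> dd u w" for u w :: "'c::real_normed_vector"
    using filterlim_compose[OF dd_tendsto hs] .
  have q2: "(\<lambda>n. dq u w (2 * s n)) \<longlonglongrightarrow> dd u w" for u w :: "'c::real_normed_vector"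
    using filterlim_compose[OF dd_tendsto h2s] .
  have fl: "(\<lambda>n. blinfun_apply (f n) v) \<longlonglongrightarrow> dd p v"
  proof (rule tendsto_sandwich[of "\<lambda>n. dq p v (s n) - 2 * s n" _ _
        "\<lambda>n. 2 * dq p v (2 * s n) - dq p v (s n) + 2 * s n"])
    show "(\<lambda>n. dq p v (s n) - 2 * s n) \<longlonglongrightarrow> dd p v"
      using tendsto_diff[OF q1[of p v] tendsto_mult[OF tendsto_const sl, of 2]] by simp
    show "(\<lambda>n. 2 * dq p v (2 * s n) - dq p v (s n) + 2 * s n) \<longlonglongrightarrow> dd p v"
      using tendsto_add[OF tendsto_diff[OF tendsto_mult[OF tendsto_const q2[of p v], of 2] q1[of p v]]
          tendsto_mult[OF tendsto_const sl, of 2]] by simp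
  qed (use M in auto)
  have Nl: "(\<lambda>n. R (y n) * blinfun_apply (f n) v) \<longlonglongrightarrow> dd (T p) (T v)"
  proof (rule tendsto_sandwich[of "\<lambda>n. dq (T p) (T v) (s n) - 2 * (K * s n)" _ _
        "\<lambda>n. 2 * dq (T p) (T v) (2 * s n) - dq (T p) (T v) (s n) + 2 * (K * s n)"])
    have ks: "(\<lambda>n. 2 * (K * s n)) \<longlonglongrightarrow> 0"
      using tendsto_mult[OF tendsto_const tendsto_mult[OF tendsto_const sl, of K], of 2] by simp
    show "(\<lambda>n. dq (T p) (T v) (s n) - 2 * (K * s n)) \<longlonglongrightarrow> dd (T p) (T v)"
      using tendsto_diff[OF q1[of "T p" "T v"] ks] by simp
    show "(\<lambda>n. 2 * dq (T p) (T v) (2 * s n) - dq (T p) (T v) (s n) + 2 * (K * s n)) \<longlonglongrightarrow> dd (T p) (T v)"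
      using tendsto_add[OF tendsto_diff[OF tendsto_mult[OF tendsto_const q2[of "T p" "T v"], of 2] q1[of "T p" "T v"]] ks] by simp
  qed (use N in auto)
  have yl: "y \<longlonglongrightarrow> p"
  proof -
    have a: "(\<lambda>n. p + s n *\<^sub>R v) \<longlonglongrightarrow> p + 0 *\<^sub>R v"
      by (intro tendsto_intros sl)
    have "(\<lambda>n. y n - (p + s n *\<^sub>R v)) \<longlonglongrightarrow> 0"
    proof (rule Lim_null_comparison[of _ "\<lambda>n. s n * s n"])
      show "\<forall>\<^sub>F n in sequentially. norm (y n - (p + s n *\<^sub>R v)) \<le> s n * s n"
        using en by (simp add: algebra_simps)
      show "(\<lambda>n. s n * s n) \<longlonglongrightarrow> 0" using tendsto_mult[OF sl sl] by simp
    qed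
    from tendsto_add[OF a this] show ?thesis by simp
  qed
  have Rl: "(\<lambda>n. R (y n)) \<longlonglongrightarrow> R p"
    unfolding R_def using p by (intro tendsto_intros T.tendsto yl) auto
  have "(\<lambda>n. R (y n) * blinfun_apply (f n) v) \<longlonglongrightarrow> R p * dd p v"
    by (intro tendsto_mult Rl fl)
  with Nl have "dd (T p) (T v) = R p * dd p v" by (rule LIMSEQ_unique)
  then show ?thesis by (simp add: R_def)
qed



lemma right_quot:
  fixes T :: "'a::real_normed_vector \<Rightarrow> 'b::real_normed_vector"
  assumes T: "bounded_linear T" and p: "p \<noteq> 0"
    and key: "dd (T p) (T w) = (norm (T p) / norm p) * dd p w"
  shows "((\<lambda>t. (norm (T (p + t *\<^sub>R w)) / norm (p + t *\<^sub>R w) - norm (T p) / norm p) / t) \<longlongrightarrow> 0) (at_right 0)"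
proof -
  interpret T: bounded_linear T by fact
  have "((\<lambda>t. p + t *\<^sub>R w) \<longlongrightarrow> p + (0::real) *\<^sub>R w) (at_right 0)"
    by (intro tendsto_intros)
  then have c: "((\<lambda>t. p + t *\<^sub>R w) \<longlongrightarrow> p) (at_right 0)" by simp
  have ev: "\<forall>\<^sub>F t in at_right 0. p + t *\<^sub>R w \<noteq> 0"
    using tendsto_imp_eventually_ne[OF c p] .
  have ev2: "\<forall>\<^sub>F t in at_right (0::real). 0 < t" by (simp add: eventually_at_right_less)
  have eq: "\<forall>\<^sub>F t in at_right 0. (dq (T p) (T w) t - (norm (T p) / norm p) * dq p w t) / norm (p + t *\<^sub>R w)
      = (norm (T (p + t *\<^sub>R w)) / norm (p + t *\<^sub>R w) - norm (T p) / norm p) / t"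
    using ev ev2
  proof eventually_elim
    case (elim t)
    define a where "a = norm (T p + t *\<^sub>R T w)"
    define b where "b = norm (p + t *\<^sub>R w)"
    define A where "A = norm (T p)"
    define B where "B = norm p"
    have b0: "b \<noteq> 0" using elim by (simp add: b_def)
    have B0: "B \<noteq> 0" using p by (simp add: B_def)
    have t0: "t \<noteq> 0" using elim by simp
    have "((a - A) / t - A / B * ((b - B) / t)) / b = (a / b - A / B) / t"
      using b0 B0 t0 by (simp add: field_simps)
    then show ?case by (simp add: dq_def T.add T.scaleR a_def b_def A_def B_def)
  qed
  have "((\<lambda>t. (dq (T p) (T w) t - (norm (T p) / norm p) * dq p w t) / norm (p + t *\<^sub>R w)) \<longlongrightarrow>
      (dd (T p) (T w) - (norm (T p) / norm p) * dd p w) / norm p) (at_right 0)"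
    by (rule tendsto_divide[OF tendsto_diff[OF dd_tendsto tendsto_mult[OF tendsto_const dd_tendsto]] tendsto_norm[OF c]])
      (use p in simp)
  then have "((\<lambda>t. (dq (T p) (T w) t - (norm (T p) / norm p) * dq p w t) / norm (p + t *\<^sub>R w)) \<longlongrightarrow> 0) (at_right 0)"
    using key by simp
  then show ?thesis using tendsto_cong[OF eq] by simp
qed

lemma deriv_zero:
  fixes T :: "'a::real_normed_vector \<Rightarrow> 'b::real_normed_vector"
  assumes T: "bounded_linear T" and p: "p \<noteq> 0"
    and key: "\<And>w. dd (T p) (T w) = (norm (T p) / norm p) * dd p w"
  shows "((\<lambda>t. norm (T (p + t *\<^sub>R v)) / norm (p + t *\<^sub>R v)) has_real_derivative 0) (at 0)"
proof -
  define r where "r t = norm (T (p + t *\<^sub>R v)) / norm (p + t *\<^sub>R v)" for t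
  define g where "g t = (r t - norm (T p) / norm p) / t" for t
  have r: "(g \<longlongrightarrow> 0) (at_right 0)"
    unfolding g_def r_def by (rule right_quot[OF T p key])
  have r2: "((\<lambda>t. (norm (T (p + t *\<^sub>R (- v))) / norm (p + t *\<^sub>R (- v)) - norm (T p) / norm p) / t) \<longlongrightarrow> 0) (at_right 0)"
    by (rule right_quot[OF T p key])
  have geq: "(\<lambda>t. g (- t)) = (\<lambda>t. - ((norm (T (p + t *\<^sub>R (- v))) / norm (p + t *\<^sub>R (- v)) - norm (T p) / norm p) / t))"
  proof
    fix t :: real
    have "p + (- t) *\<^sub>R v = p + t *\<^sub>R (- v)" by simp
    then show "g (- t) = - ((norm (T (p + t *\<^sub>R (- v))) / norm (p + t *\<^sub>R (- v)) - norm (T p) / norm p) / t)"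
      unfolding g_def r_def by (metis divide_minus_right)
  qed
  have "((\<lambda>t. g (- t)) \<longlongrightarrow> - 0) (at_right 0)"
    unfolding geq by (rule tendsto_minus[OF r2])
  then have "((\<lambda>t. g (- t)) \<longlongrightarrow> 0) (at_right (- 0))" by simp
  then have l: "(g \<longlongrightarrow> 0) (at_left 0)"
    by (rule filterlim_at_left_to_right[THEN iffD2])
  have gl: "(g \<longlongrightarrow> 0) (at 0)" by (rule filterlim_split_at[OF l r])
  have r0: "r 0 = norm (T p) / norm p" by (simp add: r_def)
  have "(\<lambda>y. (r y - r 0) / (y - 0)) = g"
    by (rule ext) (simp add: g_def r0)
  then have "(r has_real_derivative 0) (at 0)"
    unfolding has_field_derivative_iff using gl by simp
  then show ?thesis by (simp add: r_def[abs_def])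
qed



lemma const_ratio:
  fixes T :: "'a::real_normed_vector \<Rightarrow> 'b::real_normed_vector"
  assumes T: "bounded_linear T"
    and key: "\<And>p w. p \<noteq> 0 \<Longrightarrow> dd (T p) (T w) = (norm (T p) / norm p) * dd p w"
    and x0: "x0 \<noteq> 0" and x: "x \<noteq> 0"
  shows "norm (T x) / norm x = norm (T x0) / norm x0"
proof (cases "\<exists>t\<in>{0..1}. x0 + t *\<^sub>R (x - x0) = 0")
  case True
  interpret T: bounded_linear T by fact
  from True obtain t where t: "0 \<le> t" "t \<le> 1" "x0 + t *\<^sub>R (x - x0) = 0" by auto
  have t0: "t \<noteq> 0" using t x0 by auto
  have "t *\<^sub>R x = - ((1 - t) *\<^sub>R x0)" using t(3) by (simp add: algebra_simps)
  then have xe: "x = (- (1 - t) / t) *\<^sub>R x0" using t0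
    by (metis (no_types, lifting) divide_inverse_commute eq_vector_fraction_iff scaleR_minus_left)
  define c where "c = - (1 - t) / t"
  have c0: "c \<noteq> 0" using x xe c_def by auto
  show ?thesis unfolding xe c_def[symmetric] using c0
    by (simp add: T.scaleR)
next
  case False
  define R where "R z = norm (T z) / norm z" for z
  define \<phi> where "\<phi> t = R (x0 + t *\<^sub>R (x - x0))" for t
  have d: "(\<phi> has_real_derivative 0) (at t)" if "t \<in> {0..1}" for t
  proof -
    define p where "p = x0 + t *\<^sub>R (x - x0)"
    have p: "p \<noteq> 0" using False that p_def by auto
    have "((\<lambda>s. norm (T (p + s *\<^sub>R (x - x0))) / norm (p + s *\<^sub>R (x - x0))) has_real_derivative 0) (at 0)"
      by (rule deriv_zero[OF T p key[OF p]])
    moreover have "(\<lambda>s. norm (T (p + s *\<^sub>R (x - x0))) / norm (p + s *\<^sub>R (x - x0))) = (\<lambda>s. \<phi> (s + t))"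
      by (rule ext) (simp add: \<phi>_def R_def p_def algebra_simps)
    ultimately have "((\<lambda>s. \<phi> (s + t)) has_real_derivative 0) (at 0)" by simp
    then show ?thesis using DERIV_shift[of \<phi> 0 0 t] by simp
  qed
  have "continuous_on {0..1} \<phi>"
    using d by (intro continuous_at_imp_continuous_on ballI DERIV_isCont) auto
  then have "\<phi> 1 = \<phi> 0"
    using DERIV_isconst_end[of 0 1 \<phi>] d by auto
  then show ?thesis by (simp add: \<phi>_def R_def)
qed



lemma gdelta_decomp:
  assumes "gdelta_in euclidean (S :: 'a::topological_space set)"
  obtains \<U> where "countable \<U>" "\<And>U. U \<in> \<U> \<Longrightarrow> open U" "\<Inter>\<U> = S"
proof -
  from assms have "(countable intersection_of openin euclidean) S"
    by (simp add: gdelta_in_alt)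
  then show ?thesis using that unfolding intersection_of_def by auto
qed

lemma interior_closure_image:
  fixes T :: "'a::banach \<Rightarrow> 'b::banach"
  assumes T: "bounded_linear T" and su: "surj T"
  shows "\<exists>w r n. 0 < r \<and> ball w r \<subseteq> closure (T ` ball 0 (real (Suc n)))"
proof (rule ccontr)
  assume no: "\<not> ?thesis"
  define C where "C n = closure (T ` ball 0 (real (Suc n)))" for n
  define \<G> where "\<G> = range C"
  have int: "interior (C n) = {}" for n
  proof (rule ccontr)
    assume "interior (C n) \<noteq> {}"
    then obtain w where w: "w \<in> interior (C n)" by auto
    have "open (interior (C n))" by simp
    then obtain r where r: "0 < r" "ball w r \<subseteq> interior (C n)"
      using w open_contains_ball by blast
    then have "ball w r \<subseteq> C n" using interior_subset by blast
    with r(1) no show False unfolding C_def by blast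
  qed
  have "euclidean interior_of \<Union>\<G> = {}"
  proof (rule Baire_category_alt)
    show "completely_metrizable_space (euclidean :: 'b topology) \<or> locally_compact_space (euclidean :: 'b topology) \<and> regular_space (euclidean :: 'b topology)"
      using completely_metrizable_space_euclidean by blast
    show "countable \<G>" unfolding \<G>_def by simp
    fix A assume "A \<in> \<G>"
    then obtain n where A: "A = C n" unfolding \<G>_def by blast
    show "closedin euclidean A \<and> euclidean interior_of A = {}"
      unfolding A using int[of n] by (simp add: C_def)
  qed
  moreover have "\<Union>\<G> = UNIV"
  proof -
    have "y \<in> \<Union>\<G>" for y
    proof -
      obtain x where x: "y = T x" using su unfolding surj_def by blast
      obtain n :: nat where "norm x < real n" using reals_Archimedean2 by blast
      then have "x \<in> ball 0 (real (Suc n))" by simp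
      then have "y \<in> C n" unfolding C_def using x closure_subset by blast
      then show ?thesis unfolding \<G>_def by blast
    qed
    then show ?thesis by auto
  qed
  ultimately show False by simp
qed

lemma preimage_dense:
  fixes T :: "'a::banach \<Rightarrow> 'b::banach"
  assumes T: "bounded_linear T" and su: "surj T" and V: "open V" "closure V = UNIV"
  shows "closure (T -` V) = UNIV"
proof -
  interpret T: bounded_linear T by fact
  obtain w r n where r: "0 < r" and sub: "ball w r \<subseteq> closure (T ` ball 0 (real (Suc n)))"
    using interior_closure_image[OF T su] by blast
  define n0 where "n0 = real (Suc n)"
  have n0: "0 < n0" by (simp add: n0_def)
  have "\<exists>x\<in>T -` V. dist x x0 < e" if e: "0 < e" for x0 e
  proof -
    define l where "l = e / n0"
    have l: "0 < l" using e n0 by (simp add: l_def)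
    define q where "q = T x0 + l *\<^sub>R w"
    have "q \<in> closure V" using V by simp
    then obtain v where v: "v \<in> V" "dist v q < l * r"
      using closure_approachable l r by (metis mult_pos_pos)
    obtain \<rho> where \<rho>: "0 < \<rho>" "ball v \<rho> \<subseteq> V" using V(1) v(1) open_contains_ball by blast
    define y' where "y' = (1 / l) *\<^sub>R (v - T x0)"
    have yw: "y' - w = (1 / l) *\<^sub>R (v - q)" using l by (simp add: y'_def q_def algebra_simps)
    have "dist y' w = dist v q / l"
      using l by (simp add: dist_norm yw)
    then have "dist y' w < r" using v(2) l by (simp add: divide_less_eq mult.commute)
    then have "y' \<in> ball w r" by (simp add: dist_commute)
    then have "y' \<in> closure (T ` ball 0 n0)" using sub unfolding n0_def by blast
    then obtain b where b: "b \<in> ball 0 n0" "dist (T b) y' < \<rho> / l"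
      using closure_approachable[of y'] \<rho> l by (metis divide_pos_pos imageE)
    define x where "x = x0 + l *\<^sub>R b"
    have Tx: "T x = T x0 + l *\<^sub>R T b" by (simp add: x_def T.add T.scaleR)
    have "T x - v = l *\<^sub>R (T b - y')" using l by (simp add: Tx y'_def algebra_simps)
    then have "dist (T x) v = l * dist (T b) y'"
      using l by (simp add: dist_norm)
    also have "\<dots> < \<rho>" using b(2) l by (simp add: pos_less_divide_eq mult.commute)
    finally have "T x \<in> ball v \<rho>" by (simp add: dist_commute)
    then have "T x \<in> V" using \<rho> by blast
    moreover have "dist x x0 < e"
    proof -
      have "dist x x0 = l * norm b" using l by (simp add: x_def dist_norm)
      also have "\<dots> < l * n0" using b(1) l by simp
      finally show ?thesis using n0 by (simp add: l_def)
    qed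
    ultimately show ?thesis by auto
  qed
  then show ?thesis by (auto simp: closure_approachable)
qed



theorem mainTheorem5:
  fixes T :: "'a::banach \<Rightarrow> 'b::banach"
  assumes "closure (smooth_points :: 'a set) = UNIV"
    and "gdelta_in euclidean (smooth_points :: 'a set)"
    and "closure (smooth_points :: 'b set) = UNIV"
    and "gdelta_in euclidean (smooth_points :: 'b set)"
    and "bounded_linear T" and "bij T"
    and "\<forall>x \<in> smooth_points \<inter> T -` smooth_points. preserves_bj_at T x"
  shows "\<exists>c::real > 0. \<forall>x. norm (T x) = c * norm x"
proof -
  note T = assms(5)
  interpret T: bounded_linear T by fact
  define SX where "SX = (smooth_points :: 'a set)"
  define SY where "SY = (smooth_points :: 'b set)"
  define D where "D = SX \<inter> T -` SY"
  have su: "surj T" and inj: "inj T" using assms(6) bij_is_surj bij_is_inj by auto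
  obtain \<U> where U: "countable \<U>" "\<And>U. U \<in> \<U> \<Longrightarrow> open U" "\<Inter>\<U> = SX"
    using gdelta_decomp[OF assms(2)] SX_def by blast
  obtain \<V> where V: "countable \<V>" "\<And>V. V \<in> \<V> \<Longrightarrow> open V" "\<Inter>\<V> = SY"
    using gdelta_decomp[OF assms(4)] SY_def by blast
  define \<G> where "\<G> = \<U> \<union> (\<lambda>V. T -` V) ` \<V>"
  have GD: "\<Inter>\<G> = D"
    unfolding \<G>_def D_def using U(3) V(3) by auto
  have contT: "continuous_on UNIV T" by (rule linear_continuous_on[OF T])
  have Gprop: "open G \<and> closure G = UNIV" if "G \<in> \<G>" for G
  proof (cases "G \<in> \<U>")
    case True
    have "SX \<subseteq> G" using U(3) True by blast
    then have "closure SX \<subseteq> closure G" by (rule closure_mono)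
    then show ?thesis using True U(2) assms(1) SX_def by auto
  next
    case False
    have "G \<in> (\<lambda>V. T -` V) ` \<V>" using that False unfolding \<G>_def by blast
    then obtain V where GV: "G = T -` V" "V \<in> \<V>" by blast
    have "SY \<subseteq> V" using V(3) GV by blast
    then have "closure SY \<subseteq> closure V" by (rule closure_mono)
    then have cV: "closure V = UNIV" using assms(3) SY_def by auto
    have oV: "open V" using V(2) GV by blast
    show ?thesis unfolding GV(1)
      using preimage_dense[OF T su oV cV] open_vimage[OF oV contT] by simp
  qed
  have "euclidean closure_of \<Inter>\<G> = topspace euclidean"
  proof (rule Baire_category)
    show "completely_metrizable_space (euclidean :: 'a topology) \<or> locally_compact_space (euclidean :: 'a topology) \<and> regular_space (euclidean :: 'a topology)"
      using completely_metrizable_space_euclidean by blast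
    show "countable \<G>" unfolding \<G>_def using U(1) V(1) by simp
    fix G assume "G \<in> \<G>"
    then show "openin euclidean G \<and> euclidean closure_of G = topspace euclidean"
      using Gprop by simp
  qed
  then have cD: "closure D = UNIV" using GD by simp
  have dense: "\<exists>y\<in>D. dist y z < e" if "0 < e" for z e
    using cD that closure_approachable by blast
  have Dp: "y \<noteq> 0 \<and> (\<exists>f::'a \<Rightarrow>\<^sub>L real. norm f = 1 \<and> blinfun_apply f y = norm y \<and>
               (\<forall>z. (norm (T y) / norm y) * blinfun_apply f z \<le> norm (T z)))" if "y \<in> D" for y
  proof -
    have sp: "smooth_point y" using that by (simp add: D_def SX_def smooth_points_def)
    then obtain f where y0: "y \<noteq> 0" and f: "supp_funcs y = {f}" unfolding smooth_point_def by blast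
    then have f1: "norm f = 1" "blinfun_apply f y = norm y" unfolding supp_funcs_def by auto
    have pres: "preserves_bj_at T y" using assms(7) that by (simp add: D_def SX_def SY_def)
    show ?thesis using y0 f1 supp_dominate[OF T y0 pres f1] by blast
  qed
  obtain K where K: "\<And>z. norm (T z) \<le> K * norm z"
    using T.pos_bounded by (metis mult.commute)
  have key: "dd (T p) (T w) = (norm (T p) / norm p) * dd p w" if "p \<noteq> 0" for p w
    by (rule keyC[OF T K dense Dp that]) auto
  show ?thesis
  proof (cases "\<exists>x0::'a. x0 \<noteq> 0")
    case True
    then obtain x0 :: 'a where x0: "x0 \<noteq> 0" by blast
    have "T x0 \<noteq> 0" using inj x0 T.zero by (metis injD)
    then have c: "0 < norm (T x0) / norm x0" using x0 by simp
    have "norm (T x) = (norm (T x0) / norm x0) * norm x" for x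
    proof (cases "x = 0")
      case True then show ?thesis by simp
    next
      case False
      have "norm (T x) / norm x = norm (T x0) / norm x0"
        by (rule const_ratio[OF T key x0 False])
      then show ?thesis using False by (simp add: field_simps)
    qed
    then show ?thesis using c by blast
  next
    case False
    then have "\<And>x::'a. x = 0" by blast
    have "norm (T x) = 1 * norm x" for x
    proof -
      have "x = 0" by fact
      then show ?thesis by (simp add: T.zero)
    qed
    then show ?thesis by (intro exI[of _ "1::real"]) simp
  qed
qed

end
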